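(* Let $\mathbb{X}$ be a finite-dimensional real Banach space. If a non-zero linear operator $T:\mathbb{X}\to\mathbb{X}$ preserves Birkhoff–James orthogonality at each $x\in\operatorname{Ext}B_{\mathbb{X}}$, then $T$ is bijective.
   Context: $u\perp_B v$ means $\|u+\lambda v\|\ge\|u\|$ for all real $\lambda$; $T$ preserves Birkhoff–James orthogonality at $x$ if $x\perp_B v\Rightarrow Tx\perp_B Tv$ for all $v$. $\operatorname{Ext}B_{\mathbb{X}}$ is the set of extreme points of the closed unit ball. *)

theory Defs
  imports "HOL-Analysis.Analysis"
begin

definition bj_orth :: "'a::real_normed_vector \<Rightarrow> 'a \<Rightarrow> bool" where
  "bj_orth u v \<longleftrightarrow> (\<forall>t::real. norm (u + t *\<^sub>R v) \<ge> norm u)"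

definition preserves_bj_at :: "('a::real_normed_vector \<Rightarrow> 'b::real_normed_vector) \<Rightarrow> 'a \<Rightarrow> bool" where
  "preserves_bj_at T x \<longleftrightarrow> (\<forall>v. bj_orth x v \<longrightarrow> bj_orth (T x) (T v))"

end

theory Submission
  imports Defs "HOL-Analysis.Analysis"
begin


lemma core:
  fixes T :: "'a::real_normed_vector \<Rightarrow> 'a" and \<phi> :: "'a \<Rightarrow> real"
  assumes lin: "linear T" and lp: "linear \<phi>"
    and xb: "norm x \<le> 1"
    and mx: "\<And>y. norm y \<le> 1 \<Longrightarrow> \<phi> y \<le> \<phi> x"
    and Tk: "T k = 0" and pk: "\<phi> k \<noteq> 0" and Tx: "T x \<noteq> 0"
    and pres: "preserves_bj_at T x"
  shows False
proof -
  define M where "M = \<phi> x"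
  have "\<phi> (-x) \<le> M" using mx[of "-x"] xb by (simp add: M_def)
  hence M0: "M \<ge> 0" using linear_neg[OF lp, of x] by (simp add: M_def)
  have bnd: "\<phi> w \<le> M * norm w" for w
  proof (cases "w = 0")
    case True thus ?thesis using linear_0[OF lp] by simp
  next
    case False
    hence "\<phi> (w /\<^sub>R norm w) \<le> M" using mx[of "w /\<^sub>R norm w"] by (simp add: M_def)
    hence "\<phi> w / norm w \<le> M" using linear_scale[OF lp] False by (simp add: divide_inverse mult.commute)
    thus ?thesis using False by (simp add: divide_le_eq mult.commute)
  qed
  have "M \<noteq> 0"
  proof
    assume "M = 0"
    hence "\<phi> k \<le> 0" "\<phi> (-k) \<le> 0" using bnd[of k] bnd[of "-k"] by auto
    thus False using pk linear_neg[OF lp, of k] by simp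
  qed
  hence Mp: "M > 0" using M0 by simp
  have "norm x = 1"
    using bnd[of x] Mp xb by (simp add: M_def)
  define v where "v = x - (M / \<phi> k) *\<^sub>R k"
  have pv: "\<phi> v = 0" using pk unfolding v_def
    by (simp add: linear_diff[OF lp] linear_scale[OF lp] M_def)
  have "bj_orth x v" unfolding bj_orth_def
  proof
    fix t :: real
    have "\<phi> (x + t *\<^sub>R v) = M" by (simp add: linear_add[OF lp] linear_scale[OF lp] pv M_def)
    hence "M \<le> M * norm (x + t *\<^sub>R v)" using bnd by metis
    hence "1 \<le> norm (x + t *\<^sub>R v)" using Mp by simp
    thus "norm x \<le> norm (x + t *\<^sub>R v)" using \<open>norm x = 1\<close> by simp
  qed
  hence "bj_orth (T x) (T v)" using pres unfolding preserves_bj_at_def by blast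
  moreover have "T v = T x" unfolding v_def
    by (simp add: linear_diff[OF lin] linear_scale[OF lin] Tk)
  ultimately have "norm (T x) \<le> norm (T x + (-1) *\<^sub>R T x)" unfolding bj_orth_def by metis
  thus False using Tx by simp
qed



lemma coord_bound:
  fixes B :: "'a::real_normed_vector set"
  assumes fB: "finite B" and iB: "independent B" and sB: "span B = UNIV" and ne: "B \<noteq> {}"
  shows "\<exists>c0>0. \<forall>y b. \<bar>representation B y b\<bar> * c0 \<le> norm y"
proof -
  define F where "F i = (if i \<in> B then {-1..1} else {0::real})" for i
  define L where "L a = (\<Sum>b\<in>B. a b *\<^sub>R b)" for a :: "'a \<Rightarrow> real"
  define S1 where "S1 = PiE UNIV F \<inter> (\<Union>b\<in>B. {a. \<bar>a b\<bar> = 1})"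
  have "compactin (product_topology (\<lambda>_. euclidean) UNIV) (PiE UNIV F)"
    by (simp add: compactin_PiE F_def)
  hence cP: "compact (PiE UNIV F)"
    by (simp add: euclidean_product_topology)
  have "closed (\<Union>b\<in>B. {a::'a\<Rightarrow>real. \<bar>a b\<bar> = 1})"
    by (intro closed_UN fB ballI closed_Collect_eq continuous_intros continuous_on_product_coordinates)
  hence cS: "compact S1" unfolding S1_def using cP by (simp add: compact_Int_closed)
  obtain b0 where b0: "b0 \<in> B" using ne by auto
  have "(\<lambda>i. if i = b0 then 1 else 0) \<in> S1" unfolding S1_def F_def using b0 by auto
  hence neS: "S1 \<noteq> {}" by auto
  have cL: "continuous_on UNIV L" unfolding L_def
    by (intro continuous_intros continuous_on_product_coordinates)
  have "continuous_on S1 (\<lambda>a. norm (L a))"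
    by (intro continuous_intros continuous_on_subset[OF cL]) auto
  then obtain a0 where a0: "a0 \<in> S1" and amin: "\<And>a. a \<in> S1 \<Longrightarrow> norm (L a0) \<le> norm (L a)"
    using continuous_attains_inf[OF cS neS] by blast
  define c0 where "c0 = norm (L a0)"
  have c0p: "c0 > 0"
  proof (rule ccontr)
    assume "\<not> c0 > 0"
    hence "L a0 = 0" unfolding c0_def by simp
    moreover obtain b where "b \<in> B" "\<bar>a0 b\<bar> = 1" using a0 unfolding S1_def by auto
    ultimately have "dependent B" unfolding L_def dependent_finite[OF fB]
      by (metis abs_zero zero_neq_one)
    thus False using iB by simp
  qed
  have "\<bar>representation B y b\<bar> * c0 \<le> norm y" for y b
  proof -
    define a where "a = representation B y"
    have aout: "a i = 0" if "i \<notin> B" for i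
      using representation_ne_zero[of B y i] that unfolding a_def by auto
    have Ly: "L a = y" unfolding L_def a_def
      using sum_representation_eq[OF iB _ fB order_refl, of y] sB by simp
    define m where "m = Max ((\<lambda>b. \<bar>a b\<bar>) ` B)"
    have am: "\<bar>a i\<bar> \<le> m" if "i \<in> B" for i
      unfolding m_def using fB that by (intro Max_ge) auto
    obtain bm where bm: "bm \<in> B" "\<bar>a bm\<bar> = m"
      unfolding m_def using Max_in[of "(\<lambda>b. \<bar>a b\<bar>) ` B"] fB ne by (metis (no_types, lifting) empty_is_image finite_imageI imageE)
    show ?thesis
    proof (cases "m = 0")
      case True
      hence "a b = 0" using am aout by (cases "b \<in> B") force+
      thus ?thesis by (simp add: a_def)
    next
      case False
      hence mp: "m > 0" using bm by auto
      define a' where "a' i = a i / m" for i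
      have "a' \<in> S1" unfolding S1_def F_def a'_def
        using am aout bm mp by (auto simp: divide_le_eq le_divide_eq abs_le_iff; smt (verit))
      hence "c0 \<le> norm (L a')" using amin unfolding c0_def by blast
      moreover have "L a' = (1/m) *\<^sub>R L a" unfolding L_def a'_def
        by (simp add: scaleR_sum_right)
      ultimately have "c0 \<le> norm y / m" using Ly mp by simp
      hence "m * c0 \<le> norm y" using mp by (simp add: le_divide_eq mult.commute)
      moreover have "\<bar>a b\<bar> \<le> m" using am aout mp by (cases "b \<in> B") auto
      ultimately show ?thesis unfolding a_def
        by (meson c0p dual_order.trans less_imp_le mult_right_mono)
    qed
  qed
  thus ?thesis using c0p by blast
qed



lemma compact_ball_fd:
  fixes B :: "'a::real_normed_vector set"
  assumes fB: "finite B" and iB: "independent B" and sB: "span B = UNIV"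
    and c0: "c0 > 0" and cb: "\<And>y b. \<bar>representation B y b\<bar> * c0 \<le> norm y"
  shows "compact (cball (0::'a) 1)"
proof -
  define F where "F i = (if i \<in> B then {-1/c0..1/c0} else {0::real})" for i
  define L where "L a = (\<Sum>b\<in>B. a b *\<^sub>R b)" for a :: "'a \<Rightarrow> real"
  have "compactin (product_topology (\<lambda>_. euclidean) UNIV) (PiE UNIV F)"
    by (simp add: compactin_PiE F_def)
  hence cP: "compact (PiE UNIV F)"
    by (simp add: euclidean_product_topology)
  have cL: "continuous_on UNIV L" unfolding L_def
    by (intro continuous_intros continuous_on_product_coordinates)
  have "closed {a. norm (L a) \<le> 1}"
    by (intro closed_Collect_le continuous_intros cL)
  hence cC: "compact (PiE UNIV F \<inter> {a. norm (L a) \<le> 1})" using cP by (simp add: compact_Int_closed)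
  have "cball 0 1 = L ` (PiE UNIV F \<inter> {a. norm (L a) \<le> 1})"
  proof
    show "L ` (PiE UNIV F \<inter> {a. norm (L a) \<le> 1}) \<subseteq> cball 0 1" by auto
    show "cball 0 1 \<subseteq> L ` (PiE UNIV F \<inter> {a. norm (L a) \<le> 1})"
    proof
      fix y :: 'a assume y: "y \<in> cball 0 1"
      have Ly: "L (representation B y) = y" unfolding L_def
        using sum_representation_eq[OF iB _ fB order_refl, of y] sB by simp
      have "representation B y \<in> PiE UNIV F"
      proof -
        have "\<bar>representation B y i\<bar> \<le> 1/c0" for i
          using cb[of y i] y c0 by (simp add: le_divide_eq)
        moreover have "representation B y i = 0" if "i \<notin> B" for i
          using representation_ne_zero[of B y i] that by auto
        ultimately show ?thesis unfolding F_def by (auto simp: abs_le_iff minus_le_iff)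
      qed
      thus "y \<in> L ` (PiE UNIV F \<inter> {a. norm (L a) \<le> 1})" using Ly y
        by (intro image_eqI[of _ _ "representation B y"]) auto
    qed
  qed
  thus ?thesis using compact_continuous_image[OF continuous_on_subset[OF cL] cC] by simp
qed

lemma rep_cont:
  fixes B :: "'a::real_normed_vector set"
  assumes fB: "finite B" and iB: "independent B" and sB: "span B = UNIV"
    and c0: "c0 > 0" and cb: "\<And>y b. \<bar>representation B y b\<bar> * c0 \<le> norm y"
  shows "bounded_linear (\<lambda>y. representation B y b)"
proof (rule bounded_linear_intro[of _ "1/c0"])
  show "representation B (x + y) b = representation B x b + representation B y b" for x y
    using representation_add[OF iB, of y x] sB by simp
  show "representation B (r *\<^sub>R x) b = r *\<^sub>R representation B x b" for r x
    using representation_scale[OF iB, of x r] sB by simp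
  show "norm (representation B x b) \<le> norm x * (1 / c0)" for x
    using cb[of x b] c0 by (simp add: le_divide_eq)
qed

lemma fin_inj_surj:
  fixes T :: "'a::real_vector \<Rightarrow> 'a" and B :: "'a set"
  assumes fB: "finite B" and iB: "independent B" and sB: "span B = UNIV"
   and lin: "linear T" and "inj T"
  shows "surj T"
proof -
  interpret fd: finite_dimensional_vector_space scaleR B
    by unfold_locales (use fB iB sB in \<open>auto simp: dependent_raw_def span_raw_def\<close>)
  have "Vector_Spaces.linear (*\<^sub>R) (*\<^sub>R) T" using lin by (simp add: linear_def)
  thus ?thesis by (rule fd.linear_inj_imp_surj[OF _ \<open>inj T\<close>])
qed



lemma sq_comb:
  fixes p r :: "'b \<Rightarrow> real" and u :: real
  shows "(\<Sum>b\<in>B. ((1-u)*p b + u*r b)^2) = (1-u)*(\<Sum>b\<in>B. (p b)^2) + u*(\<Sum>b\<in>B. (r b)^2) - u*(1-u)*(\<Sum>b\<in>B. (p b - r b)^2)"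
proof -
  have "(1-u)*(\<Sum>b\<in>B. (p b)^2) + u*(\<Sum>b\<in>B. (r b)^2) - u*(1-u)*(\<Sum>b\<in>B. (p b - r b)^2)
     = (\<Sum>b\<in>B. (1-u)*(p b)^2 + u*(r b)^2 - u*(1-u)*(p b - r b)^2)"
    by (simp add: sum_distrib_left sum.distrib sum_subtractf)
  also have "\<dots> = (\<Sum>b\<in>B. ((1-u)*p b + u*r b)^2)"
    by (rule sum.cong) (auto simp: power2_eq_square algebra_simps)
  finally show ?thesis by simp
qed

lemma sq_shift:
  fixes p d :: "'b \<Rightarrow> real"
  shows "(\<Sum>b\<in>B. (p b + d b)^2) = (\<Sum>b\<in>B. (p b)^2) + (\<Sum>b\<in>B. 2 * p b * d b) + (\<Sum>b\<in>B. (d b)^2)"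
proof -
  have "(\<Sum>b\<in>B. (p b + d b)^2) = (\<Sum>b\<in>B. (p b)^2 + 2 * p b * d b + (d b)^2)"
    by (rule sum.cong) (auto simp: power2_eq_square algebra_simps)
  thus ?thesis by (simp add: sum.distrib)
qed



theorem mainTheorem11:
  fixes T :: "'a::real_normed_vector \<Rightarrow> 'a"
  assumes fin_dim: "\<exists>B. finite B \<and> span B = (UNIV :: 'a set)"
    and lin: "linear T"
    and nonzero: "T \<noteq> (\<lambda>x. 0)"
    and pres: "\<And>x. x extreme_point_of cball 0 1 \<Longrightarrow> preserves_bj_at T x"
  shows "bij T"
proof -
  obtain B0 :: "'a set" where fB0: "finite B0" and sB0: "span B0 = UNIV" using fin_dim by blast
  obtain B where BB0: "B \<subseteq> B0" and iB: "independent B" and sp: "B0 \<subseteq> span B"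
    using maximal_independent_subset[of B0] by blast
  have fB: "finite B" using BB0 fB0 finite_subset by blast
  have sB: "span B = UNIV" using span_minimal[OF sp subspace_span] sB0 by auto
  have neB: "B \<noteq> {}"
  proof
    assume "B = {}"
    hence "y = 0" for y :: 'a using sB by (metis UNIV_I span_empty singletonD)
    hence "T = (\<lambda>x. 0)" using linear_0[OF lin] by metis
    thus False using nonzero by simp
  qed
  obtain c0 where c0: "c0 > 0" and cb: "\<And>y b. \<bar>representation B y b\<bar> * c0 \<le> norm y"
    using coord_bound[OF fB iB sB neB] by blast
  define R where "R y b = representation B y b" for y b
  have cne: "cball (0::'a) 1 \<noteq> {}" by (metis centre_in_cball empty_iff zero_le_one)
  have cpt: "compact (cball (0::'a) 1)" using compact_ball_fd[OF fB iB sB c0 cb] .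
  have Rc: "continuous_on S (\<lambda>y. R y b)" for S b
    unfolding R_def by (rule linear_continuous_on[OF rep_cont[OF fB iB sB c0 cb]])
  have radd: "R (y + z) b = R y b + R z b" for y z b
    unfolding R_def using representation_add[OF iB, of z y] sB by simp
  have rscale: "R (r *\<^sub>R y) b = r * R y b" for r y b
    unfolding R_def using representation_scale[OF iB, of y r] sB by simp
  have rdiff: "R (y - z) b = R y b - R z b" for y z b
    unfolding R_def using representation_diff[OF iB, of z y] sB by simp
  have rzero: "R 0 b = 0" for b unfolding R_def by (simp add: representation_zero)
  have rsum: "y = (\<Sum>b\<in>B. R y b *\<^sub>R b)" for y
    unfolding R_def using sum_representation_eq[OF iB _ fB order_refl, of y] sB by simp
  have Tsum: "T y = (\<Sum>b\<in>B. R y b *\<^sub>R T b)" for y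
    by (subst rsum[of y]) (simp add: linear_sum[OF lin] linear_scale[OF lin])
  have Tc: "continuous_on S T" for S
    by (subst continuous_on_cong[OF refl Tsum]) (intro continuous_intros Rc)
  have RTc: "continuous_on S (\<lambda>y. R (T y) b)" for S b
    using continuous_on_compose2[OF Rc Tc, of S UNIV] by auto
  define q where "q z = (\<Sum>b\<in>B. (R z b)^2)" for z
  have q0: "q z \<ge> 0" for z unfolding q_def by (simp add: sum_nonneg)
  have qpos: "q z > 0" if "z \<noteq> 0" for z
  proof (rule ccontr)
    assume "\<not> q z > 0"
    hence "q z = 0" using q0[of z] by simp
    hence "\<forall>b\<in>B. (R z b)^2 = 0" unfolding q_def using fB by (simp add: sum_nonneg_eq_0_iff)
    hence "z = 0" using rsum[of z] by simp
    thus False using that by simp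
  qed
  have "inj T"
  proof (rule ccontr)
    assume "\<not> inj T"
    then obtain k where Tk: "T k = 0" and k0: "k \<noteq> 0" using linear_injective_0[OF lin] by blast
    obtain w where Tw: "T w \<noteq> 0" using nonzero by auto
    hence w0: "w \<noteq> 0" using linear_0[OF lin] by auto
    define w1 where "w1 = w /\<^sub>R norm w"
    have w1b: "w1 \<in> cball 0 1" unfolding w1_def using w0 by simp
    have Tw1: "T w1 \<noteq> 0" unfolding w1_def using w0 Tw by (simp add: linear_scale[OF lin])
    define A where "A = q (T w1)"
    have Ap: "A > 0" unfolding A_def using qpos Tw1 by blast
    define Ck where "Ck = q k"
    have Ckp: "Ck > 0" unfolding Ck_def using qpos k0 by blast
    have "continuous_on (cball 0 1) (\<lambda>y. \<bar>\<Sum>b\<in>B. R y b * R k b\<bar>)"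
      by (intro continuous_intros Rc)
    then obtain y1 where "y1 \<in> cball 0 1" and y1: "\<And>y. y \<in> cball 0 1 \<Longrightarrow> \<bar>\<Sum>b\<in>B. R y b * R k b\<bar> \<le> \<bar>\<Sum>b\<in>B. R y1 b * R k b\<bar>"
      using continuous_attains_sup[OF cpt cne] by blast
    define C1 where "C1 = \<bar>\<Sum>b\<in>B. R y1 b * R k b\<bar>"
    define s where "s = C1 / Ck + 1"
    have "continuous_on (cball 0 1) (\<lambda>y. q (y - s *\<^sub>R k))"
      unfolding q_def rdiff rscale by (intro continuous_intros Rc)
    then obtain y2 where "y2 \<in> cball 0 1" and y2: "\<And>y. y \<in> cball 0 1 \<Longrightarrow> q (y - s *\<^sub>R k) \<le> q (y2 - s *\<^sub>R k)"
      using continuous_attains_sup[OF cpt cne] by blast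
    define D where "D = q (y2 - s *\<^sub>R k)"
    have D0: "D \<ge> 0" unfolding D_def by (rule q0)
    define \<epsilon> where "\<epsilon> = A / (D + 1)"
    have ep: "\<epsilon> > 0" unfolding \<epsilon>_def using Ap D0 by simp
    have eD: "\<epsilon> * D < A" unfolding \<epsilon>_def using Ap D0 by (simp add: field_simps)
    define G where "G y = q (T y) + \<epsilon> * q (y - s *\<^sub>R k)" for y
    have "continuous_on (cball 0 1) G"
      unfolding G_def q_def rdiff rscale by (intro continuous_intros Rc RTc)
    then obtain x where xb: "x \<in> cball 0 1" and xmax: "\<And>y. y \<in> cball 0 1 \<Longrightarrow> G y \<le> G x"
      using continuous_attains_sup[OF cpt cne] by blast
    have Tx: "T x \<noteq> 0"
    proof
      assume "T x = 0"
      hence "G x = \<epsilon> * q (x - s *\<^sub>R k)" unfolding G_def q_def by (simp add: rzero)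
      also have "\<dots> \<le> \<epsilon> * D" unfolding D_def using y2[OF xb] ep by simp
      also have "\<dots> < A" by (rule eD)
      also have "A \<le> G w1" using mult_nonneg_nonneg[OF less_imp_le[OF ep] q0[of "w1 - s *\<^sub>R k"]]
        by (simp add: G_def A_def)
      also have "\<dots> \<le> G x" by (rule xmax[OF w1b])
      finally show False by simp
    qed
    have ext: "x extreme_point_of cball 0 1"
      unfolding extreme_point_of_def
    proof (intro conjI ballI xb notI)
      fix a b' assume ab: "a \<in> cball 0 1" "b' \<in> cball 0 1" and "x \<in> open_segment a b'"
      then obtain u where ab': "a \<noteq> b'" and u: "0 < u" "u < 1" and xu: "x = (1-u) *\<^sub>R a + u *\<^sub>R b'"
        by (auto simp: in_segment)
      have e1: "R (T x) b = (1-u) * R (T a) b + u * R (T b') b" for b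
        unfolding xu by (simp add: linear_add[OF lin] linear_scale[OF lin] radd rscale)
      have "x - s *\<^sub>R k = (1-u) *\<^sub>R (a - s *\<^sub>R k) + u *\<^sub>R (b' - s *\<^sub>R k)"
        unfolding xu by (simp add: algebra_simps)
      hence e2: "R (x - s *\<^sub>R k) b = (1-u) * R (a - s *\<^sub>R k) b + u * R (b' - s *\<^sub>R k) b" for b
        by (simp add: radd rscale)
      define H where "H = (\<Sum>b\<in>B. (R (T a) b - R (T b') b)^2) + \<epsilon> * (\<Sum>b\<in>B. (R (a - s *\<^sub>R k) b - R (b' - s *\<^sub>R k) b)^2)"
      have Gx: "G x = (1-u) * G a + u * G b' - u*(1-u) * H"
        unfolding G_def q_def H_def e1 e2 sq_comb by (simp add: algebra_simps)
      have "(\<Sum>b\<in>B. (R (a - s *\<^sub>R k) b - R (b' - s *\<^sub>R k) b)^2) = q (a - b')"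
        unfolding q_def by (simp add: rdiff)
      hence "H \<ge> \<epsilon> * q (a - b')" unfolding H_def by (simp add: sum_nonneg)
      moreover have "q (a - b') > 0" using qpos ab' by simp
      ultimately have Hp: "H > 0" using ep by (smt (verit) mult_pos_pos)
      have "(1-u) * G a + u * G b' \<le> (1-u) * G x + u * G x"
        using xmax[OF ab(1)] xmax[OF ab(2)] u by (intro add_mono mult_left_mono) auto
      moreover have "u*(1-u)*H > 0" using u Hp by simp
      ultimately show False using Gx by (simp add: algebra_simps)
    qed
    define \<phi> where "\<phi> d = (\<Sum>b\<in>B. 2 * R (T x) b * R (T d) b) + \<epsilon> * (\<Sum>b\<in>B. 2 * R (x - s *\<^sub>R k) b * R d b)" for d
    have lp: "linear \<phi>"
      by (rule linearI) (simp_all add: \<phi>_def linear_add[OF lin] linear_scale[OF lin] radd rscale sum.distrib sum_distrib_left algebra_simps)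
    have mx: "\<phi> y \<le> \<phi> x" if "norm y \<le> 1" for y
    proof -
      define d where "d = y - x"
      have e1: "R (T y) b = R (T x) b + R (T d) b" for b
        unfolding d_def by (simp add: linear_diff[OF lin] rdiff)
      have e2: "R (y - s *\<^sub>R k) b = R (x - s *\<^sub>R k) b + R d b" for b
        unfolding d_def by (simp add: rdiff)
      have "G y = G x + \<phi> d + ((\<Sum>b\<in>B. (R (T d) b)^2) + \<epsilon> * (\<Sum>b\<in>B. (R d b)^2))"
        unfolding G_def q_def \<phi>_def e1 e2 sq_shift by (simp add: algebra_simps)
      moreover have "G y \<le> G x" using xmax that by simp
      moreover have "(\<Sum>b\<in>B. (R (T d) b)^2) + \<epsilon> * (\<Sum>b\<in>B. (R d b)^2) \<ge> 0"
        using ep by (simp add: sum_nonneg)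
      ultimately have "\<phi> d \<le> 0" by linarith
      moreover have "\<phi> d = \<phi> y - \<phi> x" unfolding d_def by (rule linear_diff[OF lp])
      ultimately show ?thesis by simp
    qed
    have pk: "\<phi> k \<noteq> 0"
    proof -
      have "\<phi> k = \<epsilon> * (2 * (\<Sum>b\<in>B. R x b * R k b) - 2 * s * Ck)"
        unfolding \<phi>_def Ck_def q_def Tk
        by (simp add: rzero rdiff rscale sum_subtractf sum_distrib_left algebra_simps power2_eq_square)
      moreover have "\<bar>\<Sum>b\<in>B. R x b * R k b\<bar> \<le> C1" unfolding C1_def using y1[OF xb] .
      moreover have "s * Ck = C1 + Ck" unfolding s_def using Ckp by (simp add: field_simps)
      ultimately have "\<phi> k = \<epsilon> * (2 * (\<Sum>b\<in>B. R x b * R k b) - 2 * s * Ck)"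
        and "2 * (\<Sum>b\<in>B. R x b * R k b) - 2 * s * Ck < 0" using Ckp by (auto simp: abs_le_iff)
      thus ?thesis using ep by simp
    qed
    show False
      using core[OF lin lp _ mx Tk pk Tx pres[OF ext]] xb by simp
  qed
  moreover have "surj T" using fin_inj_surj[OF fB iB sB lin \<open>inj T\<close>] .
  ultimately show ?thesis by (simp add: bij_def)
qed


end
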